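(* Assume $X_0\in L^\infty$. Then $\inf\{\int_0^1Q(s)Q_\rho(1-s)ds : Q\in\mathscr{Q},\ Q\succeq_{\mathrm{icx}}Q_0\}=-\infty$.
   Context: $(\Omega,\mathcal{F},\mathbb{P})$ is a complete nonatomic probability space. $\rho\in L^2$ with $\mathbb{P}(\rho>0)=1$ and $\mathrm{Var}[\rho]>0$. For a random variable $X$, $Q_X(t)=\inf\{y\in\mathbb{R}:\mathbb{P}(X\le y)>t\}$, $t\in[0,1)$, and $Q_0:=Q_{X_0}$. $\mathscr{Q}$ is the set of increasing, right-continuous $Q:[0,1)\to\mathbb{R}$ with $\int_0^1Q^2(s)ds<\infty$. For $Q_1,Q_2\in\mathscr{Q}$, $Q_1\succeq_{\mathrm{icx}}Q_2$ means $\int_t^1Q_1(s)ds\ge\int_t^1Q_2(s)ds$ for all $t\in[0,1]$. *)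

theory Defs
  imports "HOL-Probability.Probability"
begin

definition nonatomic :: "'a measure \<Rightarrow> bool" where
  "nonatomic M \<longleftrightarrow> (\<forall>A\<in>sets M. measure M A > 0 \<longrightarrow>
      (\<exists>B\<in>sets M. B \<subseteq> A \<and> 0 < measure M B \<and> measure M B < measure M A))"

definition quantile :: "'a measure \<Rightarrow> ('a \<Rightarrow> real) \<Rightarrow> real \<Rightarrow> real" where
  "quantile M X t = Inf {y::real. measure M {x \<in> space M. X x \<le> y} > t}"

text \<open>The class of increasing, right-continuous, square-integrable functions on [0,1).
  Only the values on [0,1) matter.\<close>
definition QClass :: "(real \<Rightarrow> real) set" where
  "QClass = {Q. mono_on {0..<1} Q \<and> (\<forall>t\<in>{0..<1}. continuous (at_right t) Q) \<and>
       set_integrable lborel {0..<1} (\<lambda>s. (Q s)\<^sup>2)}"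

definition icx_ge :: "(real \<Rightarrow> real) \<Rightarrow> (real \<Rightarrow> real) \<Rightarrow> bool" where
  "icx_ge Q1 Q2 \<longleftrightarrow> (\<forall>t\<in>{0..1}.
      (LINT s:{t..<1}|lborel. Q1 s) \<ge> (LINT s:{t..<1}|lborel. Q2 s))"

end

theory Submission
  imports Defs
begin


lemma quantile_mono_gen:
  assumes "\<And>t. t \<in> {0..<1} \<Longrightarrow> {y. measure M {x \<in> space M. X x \<le> y} > t} \<noteq> {}
       \<and> bdd_below {y. measure M {x \<in> space M. X x \<le> y} > t}"
  shows "mono_on {0..<1} (quantile M X)"
proof (rule mono_onI)
  fix r s :: real assume rs: "r \<in> {0..<1}" "s \<in> {0..<1}" "r \<le> s"
  show "quantile M X r \<le> quantile M X s" unfolding quantile_def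
    by (rule cInf_superset_mono) (use assms[OF rs(1)] assms[OF rs(2)] rs(3) in auto)
qed

context prob_space begin

lemma quantile_bounded_rv:
  assumes X: "X \<in> borel_measurable M" and B: "AE x in M. \<bar>X x\<bar> \<le> B" and t: "t \<in> {0..<1}"
  shows "{y. measure M {x \<in> space M. X x \<le> y} > t} \<noteq> {}"
    and "bdd_below {y. measure M {x \<in> space M. X x \<le> y} > t}"
    and "quantile M X t \<le> B"
proof -
  have m: "{x \<in> space M. X x \<le> y} \<in> events" for y using X by measurable
  have "prob {x \<in> space M. X x \<le> B} = 1"
    using B by (subst prob_eq_1[OF m]) (auto elim!: AE_mp)
  then have inB: "B \<in> {y. measure M {x \<in> space M. X x \<le> y} > t}" using t by auto
  then show "{y. measure M {x \<in> space M. X x \<le> y} > t} \<noteq> {}" by blast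
  have lb: "-B \<le> y" if "y \<in> {y. measure M {x \<in> space M. X x \<le> y} > t}" for y
  proof (rule ccontr)
    assume "\<not> -B \<le> y"
    then have "AE x in M. x \<notin> {x \<in> space M. X x \<le> y}" using B by (auto elim!: AE_mp)
    then have "prob {x \<in> space M. X x \<le> y} = 0" by (subst prob_eq_0[OF m])
    then show False using that t by auto
  qed
  show bb: "bdd_below {y. measure M {x \<in> space M. X x \<le> y} > t}"
    unfolding bdd_below_def using lb by blast
  show "quantile M X t \<le> B" unfolding quantile_def using cInf_lower[OF inB bb] .
qed


lemma quantile_rho:
  assumes X: "X \<in> borel_measurable M" and I: "integrable M (\<lambda>x. (X x)\<^sup>2)"
    and pos: "AE x in M. X x > 0" and t: "t \<in> {0..<1}"
  shows "{y. measure M {x \<in> space M. X x \<le> y} > t} \<noteq> {}"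
    and "bdd_below {y. measure M {x \<in> space M. X x \<le> y} > t}"
    and "0 \<le> quantile M X t"
    and "quantile M X t \<le> sqrt (expectation (\<lambda>x. (X x)\<^sup>2) / (1 - t)) + 1"
proof -
  define K where "K = expectation (\<lambda>x. (X x)\<^sup>2)"
  have K0: "0 \<le> K" unfolding K_def by (intro integral_nonneg_AE) auto
  define y0 where "y0 = sqrt (K / (1 - t)) + 1"
  have s0: "0 \<le> sqrt (K / (1 - t))" using K0 t by auto
  have y0pos: "0 < y0" using s0 unfolding y0_def by linarith
  have "(sqrt (K / (1 - t)))\<^sup>2 < y0\<^sup>2" unfolding y0_def using s0
    by (intro power_strict_mono) auto
  then have "K / (1 - t) < y0\<^sup>2" using K0 t by simp
  then have Ky: "K / y0\<^sup>2 < 1 - t" using t y0pos by (simp add: field_simps)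
  have m: "{x \<in> space M. X x \<le> y} \<in> events" for y using X by measurable
  have m2: "{x \<in> space M. y0 < X x} \<in> events" using X by measurable
  have "prob {x \<in> space M. y0 < X x} \<le> prob {x \<in> space M. y0\<^sup>2 \<le> (X x)\<^sup>2}"
  proof (rule finite_measure_mono)
    show "{x \<in> space M. y0 < X x} \<subseteq> {x \<in> space M. y0\<^sup>2 \<le> (X x)\<^sup>2}"
      using y0pos by (auto intro!: power_mono)
    show "{x \<in> space M. y0\<^sup>2 \<le> (X x)\<^sup>2} \<in> sets M" using X by measurable
  qed
  also have "\<dots> \<le> K / y0\<^sup>2" unfolding K_def
    by (rule integral_Markov_inequality_measure[OF I]) (use y0pos in auto)
  finally have "prob {x \<in> space M. y0 < X x} < 1 - t" using Ky by linarith
  moreover have "{x \<in> space M. X x \<le> y0} = space M - {x \<in> space M. y0 < X x}" by auto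
  ultimately have "prob {x \<in> space M. X x \<le> y0} > t" using prob_compl[OF m2] by simp
  then have iny: "y0 \<in> {y. measure M {x \<in> space M. X x \<le> y} > t}" by simp
  then show "{y. measure M {x \<in> space M. X x \<le> y} > t} \<noteq> {}" by blast
  have lb: "0 \<le> y" if "y \<in> {y. measure M {x \<in> space M. X x \<le> y} > t}" for y
  proof (rule ccontr)
    assume "\<not> 0 \<le> y"
    then have "AE x in M. x \<notin> {x \<in> space M. X x \<le> y}" using pos by (auto elim!: AE_mp)
    then have "prob {x \<in> space M. X x \<le> y} = 0" by (subst prob_eq_0[OF m])
    then show False using that t by auto
  qed
  show bb: "bdd_below {y. measure M {x \<in> space M. X x \<le> y} > t}"
    unfolding bdd_below_def using lb by blast
  show "quantile M X t \<le> sqrt (expectation (\<lambda>x. (X x)\<^sup>2) / (1 - t)) + 1"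
    unfolding quantile_def using cInf_lower[OF iny bb] unfolding y0_def K_def .
  show "0 \<le> quantile M X t" unfolding quantile_def
    using iny lb by (intro cInf_greatest) auto
qed


lemma quantile_const_AE:
  assumes X: "X \<in> borel_measurable M"
    and nb: "\<And>t. t \<in> {0<..<1} \<Longrightarrow> {y. measure M {x \<in> space M. X x \<le> y} > t} \<noteq> {}
       \<and> bdd_below {y. measure M {x \<in> space M. X x \<le> y} > t}"
    and c: "\<And>t. t \<in> {0<..<1} \<Longrightarrow> quantile M X t = c"
  shows "AE x in M. X x = c"
proof -
  have m: "{x \<in> space M. X x \<le> y} \<in> events" for y using X by measurable
  have m2: "{x \<in> space M. y < X x} \<in> events" for y using X by measurable
  have lo: "prob {x \<in> space M. X x \<le> y} = 0" if y: "y < c" for y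
  proof -
    have le: "prob {x \<in> space M. X x \<le> y} \<le> t" if t: "t \<in> {0<..<1}" for t
    proof (rule ccontr)
      assume "\<not> ?thesis"
      then have "y \<in> {y. measure M {x \<in> space M. X x \<le> y} > t}" by simp
      from cInf_lower[OF this conjunct2[OF nb[OF t]]] have "quantile M X t \<le> y"
        unfolding quantile_def .
      then show False using c[OF t] y by simp
    qed
    define p where "p = prob {x \<in> space M. X x \<le> y}"
    show ?thesis
    proof (rule ccontr)
      assume "\<not> ?thesis"
      then have "p > 0" unfolding p_def using measure_nonneg[of M] by (simp add: less_le)
      then have "min (p/2) (1/2) \<in> {0<..<1}" by auto
      from le[OF this] \<open>p > 0\<close> show False unfolding p_def[symmetric] by linarith
    qed
  qed
  have hi: "prob {x \<in> space M. y < X x} = 0" if y: "c < y" for y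
  proof -
    have ge: "prob {x \<in> space M. X x \<le> y} > t" if t: "t \<in> {0<..<1}" for t
    proof -
      have "Inf {y. measure M {x \<in> space M. X x \<le> y} > t} < y"
        using c[OF t] y unfolding quantile_def by simp
      from cInf_lessD[OF conjunct1[OF nb[OF t]] this] obtain y' where
        y': "prob {x \<in> space M. X x \<le> y'} > t" "y' < y" by auto
      have "prob {x \<in> space M. X x \<le> y'} \<le> prob {x \<in> space M. X x \<le> y}"
        using y'(2) by (intro finite_measure_mono m) auto
      then show ?thesis using y'(1) by linarith
    qed
    define p where "p = prob {x \<in> space M. X x \<le> y}"
    have p1: "p \<le> 1" unfolding p_def by simp
    have "p \<ge> 1"
    proof (rule ccontr)
      assume "\<not> ?thesis"
      moreover have "p \<ge> 0" unfolding p_def by simp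
      ultimately have "(p+1)/2 \<in> {0<..<1}" by auto
      from ge[OF this] have "(p+1)/2 < p" unfolding p_def[symmetric] .
      then show False using \<open>\<not> p \<ge> 1\<close> by (simp add: field_simps)
    qed
    then have "p = 1" using p1 by simp
    moreover have "{x \<in> space M. y < X x} = space M - {x \<in> space M. X x \<le> y}" by auto
    ultimately show ?thesis using prob_compl[OF m] unfolding p_def by simp
  qed
  define N where "N = (\<Union>n. {x \<in> space M. X x \<le> c - 1 / Suc n}) \<union> (\<Union>n. {x \<in> space M. c + 1 / Suc n < X x})"
  have "N \<in> null_sets M" unfolding N_def
  proof (intro null_sets.Un null_sets_UN)
    fix n :: nat
    show "{x \<in> space M. X x \<le> c - 1 / Suc n} \<in> null_sets M"
    proof (rule null_setsI[OF _ m])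
      have "c - 1 / Suc n < c" by simp
      from lo[OF this] show "emeasure M {x \<in> space M. X x \<le> c - 1 / Suc n} = 0"
        by (simp add: emeasure_eq_measure)
    qed
    show "{x \<in> space M. c + 1 / Suc n < X x} \<in> null_sets M"
    proof (rule null_setsI[OF _ m2])
      have "c < c + 1 / Suc n" by simp
      from hi[OF this] show "emeasure M {x \<in> space M. c + 1 / Suc n < X x} = 0"
        by (simp add: emeasure_eq_measure)
    qed
  qed
  moreover have "{x \<in> space M. \<not> X x = c} \<subseteq> N"
  proof
    fix x assume x: "x \<in> {x \<in> space M. \<not> X x = c}"
    show "x \<in> N"
    proof (cases "X x < c")
      case True
      then have "0 < c - X x" by simp
      from reals_Archimedean[OF this] obtain n where "inverse (real (Suc n)) < c - X x" by blast
      then have "X x \<le> c - 1 / Suc n" unfolding inverse_eq_divide by linarith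
      then have "x \<in> {x \<in> space M. X x \<le> c - 1 / Suc n}" using x by simp
      then show ?thesis unfolding N_def by (intro UnI1 UN_I[OF UNIV_I])
    next
      case False
      then have "X x > c" using x by auto
      then have "0 < X x - c" by simp
      from reals_Archimedean[OF this] obtain n where "inverse (real (Suc n)) < X x - c" by blast
      then have "c + 1 / Suc n < X x" unfolding inverse_eq_divide by linarith
      then have "x \<in> {x \<in> space M. c + 1 / Suc n < X x}" using x by simp
      then show ?thesis unfolding N_def by (intro UnI2 UN_I[OF UNIV_I])
    qed
  qed
  ultimately show ?thesis by (rule AE_I')
qed

lemma variance_AE_const:
  assumes X: "X \<in> borel_measurable M" and c: "AE x in M. X x = (c::real)"
  shows "variance X = 0"
proof -
  have "expectation X = expectation (\<lambda>x. c)" by (rule integral_cong_AE[OF X _ c]) auto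
  moreover have "expectation (\<lambda>x. c) = c" using prob_space by simp
  ultimately have E: "expectation X = c" by simp
  have "variance X = expectation (\<lambda>x. 0::real)"
    unfolding E by (rule integral_cong_AE) (use X c in auto)
  then show ?thesis by simp
qed

end


lemma set_integral_indicator_real:
  "(LINT s:A|lborel. (indicator B s :: real)) = measure lborel (A \<inter> B)"
proof -
  have "(\<lambda>s. indicator A s *\<^sub>R (indicator B s :: real)) = indicator (A \<inter> B)"
    by (auto simp: fun_eq_iff indicator_def)
  then show ?thesis unfolding set_lebesgue_integral_def by simp
qed

lemma set_integrable_indicator_real:
  assumes "A \<inter> B \<in> sets lborel" "emeasure lborel (A \<inter> B) < \<infinity>"
  shows "set_integrable lborel A (\<lambda>s. indicator B s :: real)"
proof -
  have "(\<lambda>s. indicator A s *\<^sub>R (indicator B s :: real)) = indicator (A \<inter> B)"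
    by (auto simp: fun_eq_iff indicator_def)
  then show ?thesis unfolding set_integrable_def using assms by (simp add: integrable_indicator_iff)
qed

lemma bounded_mult_set_integrable:
  fixes f g :: "real \<Rightarrow> real"
  assumes g: "set_integrable lborel A g" and f: "f \<in> borel_measurable borel" and D: "\<And>s. \<bar>f s\<bar> \<le> D"
  shows "set_integrable lborel A (\<lambda>s. f s * g s)"
  unfolding set_integrable_def
proof (rule Bochner_Integration.integrable_bound)
  show "integrable lborel (\<lambda>s. D * (indicator A s *\<^sub>R g s))"
    using g unfolding set_integrable_def by simp
  have "(\<lambda>s. f s * (indicator A s *\<^sub>R g s)) \<in> borel_measurable lborel"
    using borel_measurable_integrable[OF g[unfolded set_integrable_def]] f by measurable
  moreover have "(\<lambda>s. f s * (indicator A s *\<^sub>R g s)) = (\<lambda>s. indicator A s *\<^sub>R (f s * g s))"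
    by (auto simp: fun_eq_iff)
  ultimately show "(\<lambda>s. indicator A s *\<^sub>R (f s * g s)) \<in> borel_measurable lborel" by simp
  have D0: "0 \<le> D" using D[of 0] by linarith
  show "AE s in lborel. norm (indicator A s *\<^sub>R (f s * g s)) \<le> norm (D * (indicator A s *\<^sub>R g s))"
  proof (intro AE_I2)
    fix s
    have "\<bar>f s\<bar> * \<bar>g s\<bar> \<le> D * \<bar>g s\<bar>" using D[of s] by (intro mult_right_mono) auto
    then show "norm (indicator A s *\<^sub>R (f s * g s)) \<le> norm (D * (indicator A s *\<^sub>R g s))"
      using D0 by (auto simp: indicator_def abs_mult)
  qed
qed

lemma powr_half_integrable: "set_integrable lborel {0<..<1} (\<lambda>s::real. s powr (-1/2))"
proof -
  have "(\<lambda>s::real. s powr (-1/2)) integrable_on {0<..1}"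
    by (rule integrable_on_powr_from_0') auto
  then have "(\<lambda>s::real. s powr (-1/2)) absolutely_integrable_on {0<..1}"
    by (subst absolutely_integrable_on_iff_nonneg) auto
  then have "set_integrable lborel {0<..1} (\<lambda>s::real. s powr (-1/2))"
    unfolding set_integrable_def by (subst (asm) integrable_completion) auto
  then show ?thesis by (rule set_integrable_subset) auto
qed


lemma set_integrable_const_real:
  assumes "A \<in> sets lborel" "emeasure lborel A < \<infinity>"
  shows "set_integrable lborel A (\<lambda>_. c::real)"
proof -
  have "set_integrable lborel A (\<lambda>s. indicator UNIV s :: real)"
    using assms by (intro set_integrable_indicator_real) auto
  then have "set_integrable lborel A (\<lambda>s. 1 :: real)" by simp
  from set_integrable_mult_right[of c lborel A, OF this] show ?thesis by simp
qed



theorem theorem4p1: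
  fixes M :: "'a measure" and \<rho> X0 :: "'a \<Rightarrow> real"
  assumes "prob_space M"
    and "complete_measure M"
    and "nonatomic M"
    and "\<rho> \<in> borel_measurable M"
    and "integrable M (\<lambda>x. (\<rho> x)\<^sup>2)"
    and "AE x in M. \<rho> x > 0"
    and "prob_space.variance M \<rho> > 0"
    and "X0 \<in> borel_measurable M"
    and "\<exists>C. AE x in M. \<bar>X0 x\<bar> \<le> C"
  shows "(INF Q\<in>{Q\<in>QClass. icx_ge Q (quantile M X0)}.
            ereal (LINT s:{0<..<1}|lborel. Q s * quantile M \<rho> (1 - s))) = -\<infinity>"
proof -
  interpret P: prob_space M by fact
  note rho = assms(4) and rhoI = assms(5) and rhopos = assms(6) and var = assms(7)
  define K where "K = P.expectation (\<lambda>x. (\<rho> x)\<^sup>2)"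
  define q where "q = quantile M \<rho>"
  have qr: "{y. measure M {x \<in> space M. \<rho> x \<le> y} > t} \<noteq> {}
       \<and> bdd_below {y. measure M {x \<in> space M. \<rho> x \<le> y} > t}" if "t \<in> {0..<1}" for t
    using P.quantile_rho(1,2)[OF rho rhoI rhopos that] by blast
  have q0: "0 \<le> q t" if "t \<in> {0..<1}" for t
    using P.quantile_rho(3)[OF rho rhoI rhopos that] unfolding q_def .
  have qb: "q t \<le> sqrt (K / (1 - t)) + 1" if "t \<in> {0..<1}" for t
    using P.quantile_rho(4)[OF rho rhoI rhopos that] unfolding q_def K_def .
  have qmono: "mono_on {0..<1} q" unfolding q_def by (rule quantile_mono_gen, erule qr)
  have "\<exists>t1 t2. 0 < t1 \<and> t1 < t2 \<and> t2 < 1 \<and> q t1 < q t2"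
  proof (rule ccontr)
    assume H: "\<not> ?thesis"
    have c: "quantile M \<rho> t = q (1/2)" if t: "t \<in> {0<..<1}" for t
    proof (cases t "1/2::real" rule: linorder_cases)
      case less
      then have "q t \<le> q (1/2)" using t by (intro mono_onD[OF qmono]) auto
      moreover have "\<not> q t < q (1/2)" using H t less by auto
      ultimately show ?thesis unfolding q_def by simp
    next
      case equal then show ?thesis unfolding q_def by (rule arg_cong)
    next
      case greater
      then have "q (1/2) \<le> q t" using t by (intro mono_onD[OF qmono]) auto
      moreover have "\<not> q (1/2) < q t" using H t greater by auto
      ultimately show ?thesis unfolding q_def by simp
    qed
    have "AE x in M. \<rho> x = q (1/2)"
      by (rule P.quantile_const_AE[OF rho _ c]) (use qr in auto)
    from P.variance_AE_const[OF rho this] var show False by simp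
  qed
  then obtain t1 t2 where t12: "0 < t1" "t1 < t2" "t2 < 1" "q t1 < q t2" by blast
  define s1 where "s1 = 1 - t2"
  define s2 where "s2 = 1 - t1"
  define g where "g s = q (1 - s)" for s
  have s12: "0 < s1" "s1 < s2" "s2 < 1" using t12 unfolding s1_def s2_def by auto
  have g12: "g s2 < g s1" using t12 unfolding g_def s1_def s2_def by simp
  have gmono: "g b \<le> g a" if "0 < a" "a \<le> b" "b \<le> 1" for a b
    unfolding g_def using that by (intro mono_onD[OF qmono]) auto
  have g0: "0 \<le> g s" if "0 < s" "s \<le> 1" for s
    unfolding g_def using that by (intro q0) auto
  have gb: "g s \<le> sqrt K * s powr (-1/2) + 1" if "0 < s" "s \<le> 1" for s
  proof -
    have "g s \<le> sqrt (K / s) + 1" unfolding g_def using qb[of "1 - s"] that by simp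
    also have "sqrt (K / s) = sqrt K * s powr (-1/2)"
      using that by (simp add: powr_minus_divide powr_half_sqrt real_sqrt_divide)
    finally show ?thesis .
  qed

  have gmeas: "(\<lambda>s. indicator {0<..<1} s *\<^sub>R g s) \<in> borel_measurable lborel"
  proof -
    have "mono_on {0<..<1} (\<lambda>s. - g s)"
      by (rule mono_onI) (use gmono in auto)
    from borel_measurable_mono_on_fnc[OF this]
    have "(\<lambda>s. indicator {0<..<1} s *\<^sub>R (- g s)) \<in> borel_measurable borel"
      by (subst (asm) borel_measurable_restrict_space_iff) auto
    then have "(\<lambda>s. - (indicator {0<..<1} s *\<^sub>R (- g s))) \<in> borel_measurable borel"
      by measurable
    then show ?thesis by simp
  qed
  have gint: "set_integrable lborel {0<..<1} g"
    unfolding set_integrable_def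
  proof (rule Bochner_Integration.integrable_bound)
    have "set_integrable lborel {0<..<1} (\<lambda>s. sqrt K * s powr (-1/2) + 1)"
    proof (rule set_integral_add(1))
      show "set_integrable lborel {0<..<1} (\<lambda>s. sqrt K * s powr (-1/2))"
        using powr_half_integrable by (rule set_integrable_mult_right)
      show "set_integrable lborel {0<..<1::real} (\<lambda>s. 1::real)"
        by (rule set_integrable_const_real) (simp_all add: greaterThanLessThan_borel)
    qed
    then show "integrable lborel (\<lambda>s. indicator {0<..<1} s *\<^sub>R (sqrt K * s powr (-1/2) + 1))"
      unfolding set_integrable_def .
    show "(\<lambda>s. indicator {0<..<1} s *\<^sub>R g s) \<in> borel_measurable lborel" by (rule gmeas)
    show "AE s in lborel. norm (indicator {0<..<1} s *\<^sub>R g s)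
       \<le> norm (indicator {0<..<1} s *\<^sub>R (sqrt K * s powr (-1/2) + 1))"
    proof (intro AE_I2)
      fix s :: real
      show "norm (indicator {0<..<1} s *\<^sub>R g s)
       \<le> norm (indicator {0<..<1} s *\<^sub>R (sqrt K * s powr (-1/2) + 1))"
      proof (cases "s \<in> {0<..<1}")
        case True
        then show ?thesis using g0[of s] gb[of s] by auto
      qed auto
    qed
  qed
  obtain C0 where C0: "AE x in M. \<bar>X0 x\<bar> \<le> C0" using assms(9) by blast
  define B where "B = \<bar>C0\<bar>"
  have B0: "0 \<le> B" unfolding B_def by simp
  have BX: "AE x in M. \<bar>X0 x\<bar> \<le> B" using C0 unfolding B_def by (auto elim!: AE_mp)
  have Q0b: "quantile M X0 t \<le> B" if "t \<in> {0..<1}" for t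
    using P.quantile_bounded_rv(3)[OF assms(8) BX that] .
  have icx0: "(LINT s:{t..<1}|lborel. quantile M X0 s) \<le> B * (1 - t)" if t: "t \<in> {0..1}" for t
  proof (cases "set_integrable lborel {t..<1} (quantile M X0)")
    case True
    have "(LINT s:{t..<1}|lborel. quantile M X0 s) \<le> (LINT s:{t..<1}|lborel. B)"
    proof (rule set_integral_mono[OF True set_integrable_const_real])
      show "{t..<1} \<in> sets lborel" by (simp add: atLeastLessThan_borel)
      show "emeasure lborel {t..<1} < \<infinity>" using t by simp
    qed (use Q0b t in auto)
    also have "\<dots> = B * (1 - t)" using t by (subst set_integral_const) (auto simp: atLeastLessThan_borel)
    finally show ?thesis .
  next
    case False
    then have "(LINT s:{t..<1}|lborel. quantile M X0 s) = 0"
      unfolding set_lebesgue_integral_def set_integrable_def by (rule not_integrable_integral_eq)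
    then show ?thesis using B0 t by simp
  qed

  define \<beta> where "\<beta> = 1 / (1 - s2)"
  have \<beta>1: "1 \<le> \<beta>" and \<beta>s2: "\<beta> * (1 - s2) = 1" using s12 by (auto simp: \<beta>_def field_simps)
  define Qf where "Qf l s = B - l + l * \<beta> * indicator {s2..} s" for l s :: real
  define h where "h s = \<beta> * indicator {s2..} s - (1::real)" for s :: real
  have ind_meas: "(\<lambda>s::real. indicator {a..} s :: real) \<in> borel_measurable borel" for a :: real
    by (intro borel_measurable_indicator) (simp add: atLeast_borel)
  have indI: "set_integrable lborel A (\<lambda>s. indicator {a..} s :: real)"
    if A: "A \<in> sets borel" "emeasure lborel A < \<infinity>" for A and a :: real
  proof (rule set_integrable_indicator_real)
    show "A \<inter> {a..} \<in> sets lborel" using A by (simp add: atLeast_borel sets.Int)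
    have "emeasure lborel (A \<inter> {a..}) \<le> emeasure lborel A"
      by (rule emeasure_mono) (use A in auto)
    then show "emeasure lborel (A \<inter> {a..}) < \<infinity>" using A(2) by (rule le_less_trans)
  qed
  have QfI: "set_integrable lborel A (Qf l)"
    if A: "A \<in> sets borel" "emeasure lborel A < \<infinity>" for A and l :: real
    unfolding Qf_def
  proof (rule set_integral_add(1))
    show "set_integrable lborel A (\<lambda>s. B - l)" by (rule set_integrable_const_real) (use A in auto)
    show "set_integrable lborel A (\<lambda>s. l * \<beta> * indicator {s2..} s)"
      by (rule set_integrable_mult_right) (rule indI[OF A])
  qed
  have Qf_meas: "Qf l \<in> borel_measurable borel" for l
    unfolding Qf_def using ind_meas[of s2] by measurable
  have Qf_bound: "\<bar>Qf l s\<bar> \<le> \<bar>B - l\<bar> + \<bar>l * \<beta>\<bar>" for l s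
    unfolding Qf_def by (auto simp: indicator_def)
  have QC: "Qf l \<in> QClass" if l: "0 \<le> l" for l
    unfolding QClass_def
  proof (intro CollectI conjI ballI)
    show "mono_on {0..<1} (Qf l)"
    proof (rule mono_onI)
      fix r s :: real assume "r \<in> {0..<1}" "s \<in> {0..<1}" "r \<le> s"
      then have "indicator {s2..} r \<le> (indicator {s2..} s :: real)" by (auto simp: indicator_def)
      then have "l * \<beta> * indicator {s2..} r \<le> l * \<beta> * (indicator {s2..} s :: real)"
        using l \<beta>1 by (intro mult_left_mono) auto
      then show "Qf l r \<le> Qf l s" unfolding Qf_def by simp
    qed
  next
    fix t :: real assume t: "t \<in> {0..<1}"
    show "continuous (at_right t) (Qf l)"
      unfolding continuous_within
    proof (rule tendsto_eventually)
      show "\<forall>\<^sub>F s in at_right t. Qf l s = Qf l t"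
      proof (cases "t < s2")
        case True
        show ?thesis by (rule eventually_at_rightI[OF _ True]) (use True in \<open>auto simp: Qf_def\<close>)
      next
        case False
        show ?thesis using eventually_at_right_less[of t]
          by eventually_elim (use False in \<open>auto simp: Qf_def\<close>)
      qed
    qed
  next
    have "set_integrable lborel {0..<1} (Qf l)"
      by (rule QfI) (auto simp: atLeastLessThan_borel)
    then show "set_integrable lborel {0..<1} (\<lambda>s. (Qf l s)\<^sup>2)"
      unfolding power2_eq_square
      by (rule bounded_mult_set_integrable[OF _ Qf_meas Qf_bound])
  qed
  have LQ: "(LINT s:{t..<1}|lborel. Qf l s) = (B - l) * (1 - t) + l * \<beta> * (1 - max t s2)"
    if t: "t \<in> {0..1}" for t l
  proof -
    have A: "{t..<1} \<in> sets borel" "emeasure lborel {t..<1} < \<infinity>" using t by (auto simp: atLeastLessThan_borel)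
    have "(LINT s:{t..<1}|lborel. Qf l s) = (LINT s:{t..<1}|lborel. B - l)
        + (LINT s:{t..<1}|lborel. l * \<beta> * indicator {s2..} s)"
      unfolding Qf_def
      by (rule set_integral_add(2)) (use set_integrable_const_real[OF _ A(2)] A indI[OF A] in auto)
    also have "(LINT s:{t..<1}|lborel. B - l) = (B - l) * (1 - t)"
      using t by (subst set_integral_const) (auto simp: atLeastLessThan_borel)
    also have "(LINT s:{t..<1}|lborel. l * \<beta> * indicator {s2..} s) = l * \<beta> * (1 - max t s2)"
    proof -
      have "{t..<1} \<inter> {s2..} = {max t s2..<1}" by auto
      moreover have "max t s2 \<le> 1" using t s12 by auto
      ultimately show ?thesis by (simp add: set_integral_indicator_real)
    qed
    finally show ?thesis .
  qed
  have icx: "icx_ge (Qf l) (quantile M X0)" if l: "0 \<le> l" for l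
    unfolding icx_ge_def
  proof
    fix t :: real assume t: "t \<in> {0..1}"
    have "1 - t \<le> \<beta> * (1 - max t s2)"
    proof (cases "t \<le> s2")
      case True then show ?thesis using \<beta>s2 t by auto
    next
      case False
      then have "1 * (1 - t) \<le> \<beta> * (1 - t)" using t \<beta>1 by (intro mult_right_mono) auto
      then show ?thesis using False by auto
    qed
    then have "l * (1 - t) \<le> l * (\<beta> * (1 - max t s2))" using l by (rule mult_left_mono)
    then have "B * (1 - t) \<le> (LINT s:{t..<1}|lborel. Qf l s)" unfolding LQ[OF t] by (simp add: algebra_simps)
    then show "(LINT s:{t..<1}|lborel. quantile M X0 s) \<le> (LINT s:{t..<1}|lborel. Qf l s)"
      using icx0[OF t] by linarith
  qed

  have h_meas: "h \<in> borel_measurable borel" unfolding h_def using ind_meas[of s2] by measurable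
  have h_bound: "\<bar>h s\<bar> \<le> \<beta> + 1" for s unfolding h_def using \<beta>1 by (auto simp: indicator_def)
  have hgI: "set_integrable lborel {0<..<1} (\<lambda>s. h s * g s)"
    by (rule bounded_mult_set_integrable[OF gint h_meas h_bound])
  have A01: "{0<..<1::real} \<in> sets borel" "emeasure lborel {0<..<1::real} < \<infinity>"
    by (auto simp: greaterThanLessThan_borel)
  define \<psi> where "\<psi> s = - g s1 + (g s1 - g s2) * indicator {s1..} s + \<beta> * g s2 * indicator {s2..} s"
    for s :: real
  have \<psi>I: "set_integrable lborel {0<..<1} \<psi>"
    unfolding \<psi>_def
    by (intro set_integral_add(1) set_integrable_mult_right indI[OF A01] set_integrable_const_real)
       (use A01 in auto)
  have \<psi>int: "(LINT s:{0<..<1}|lborel. \<psi> s) = - (s1 * (g s1 - g s2))"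
  proof -
    have i1: "set_integrable lborel {0<..<1} (\<lambda>s. (g s1 - g s2) * indicator {s1..} s)"
      by (intro set_integrable_mult_right indI[OF A01])
    have i2: "set_integrable lborel {0<..<1} (\<lambda>s. \<beta> * g s2 * indicator {s2..} s)"
      by (intro set_integrable_mult_right indI[OF A01])
    have i0: "set_integrable lborel {0<..<1::real} (\<lambda>s. - g s1)"
      by (rule set_integrable_const_real) (use A01 in auto)
    have "(LINT s:{0<..<1}|lborel. \<psi> s) = (LINT s:{0<..<1::real}|lborel. - g s1)
       + (LINT s:{0<..<1}|lborel. (g s1 - g s2) * indicator {s1..} s)
       + (LINT s:{0<..<1}|lborel. \<beta> * g s2 * indicator {s2..} s)"
      unfolding \<psi>_def
      by (subst set_integral_add(2)[OF set_integral_add(1)[OF i0 i1] i2],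
          subst set_integral_add(2)[OF i0 i1]) (rule refl)
    also have "(LINT s:{0<..<1::real}|lborel. - g s1) = - g s1"
      by (subst set_integral_const) (use A01 in auto)
    also have "(LINT s:{0<..<1}|lborel. (g s1 - g s2) * indicator {s1..} s) = (g s1 - g s2) * (1 - s1)"
    proof -
      have "{0<..<1} \<inter> {s1..} = {s1..<1}" using s12 by auto
      then show ?thesis using s12 by (simp add: set_integral_indicator_real)
    qed
    also have "(LINT s:{0<..<1}|lborel. \<beta> * g s2 * indicator {s2..} s) = \<beta> * g s2 * (1 - s2)"
    proof -
      have "{0<..<1} \<inter> {s2..} = {s2..<1}" using s12 by auto
      then show ?thesis using s12 by (simp add: set_integral_indicator_real)
    qed
    also have "\<beta> * g s2 * (1 - s2) = (\<beta> * (1 - s2)) * g s2" by (simp add: ac_simps)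
    also have "\<dots> = g s2" unfolding \<beta>s2 by simp
    finally show ?thesis by (simp add: algebra_simps)
  qed
  have hg_le: "h s * g s \<le> \<psi> s" if s: "s \<in> {0<..<1}" for s
  proof -
    consider "s < s1" | "s1 \<le> s" "s < s2" | "s2 \<le> s" by linarith
    then show ?thesis
    proof cases
      case 1
      then have "g s1 \<le> g s" using s s12 by (intro gmono) auto
      then show ?thesis using 1 s12 unfolding h_def \<psi>_def by (auto simp: indicator_def)
    next
      case 2
      then have "g s2 \<le> g s" using s s12 by (intro gmono) auto
      then show ?thesis using 2 s12 unfolding h_def \<psi>_def by (auto simp: indicator_def)
    next
      case 3
      then have "g s \<le> g s2" using s s12 by (intro gmono) auto
      then have "(\<beta> - 1) * g s \<le> (\<beta> - 1) * g s2" using \<beta>1 by (intro mult_left_mono) auto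
      then show ?thesis using 3 s12 unfolding h_def \<psi>_def by (auto simp: indicator_def algebra_simps)
    qed
  qed
  define G where "G = (LINT s:{0<..<1}|lborel. g s)"
  define H where "H = (LINT s:{0<..<1}|lborel. h s * g s)"
  define \<delta> where "\<delta> = s1 * (g s1 - g s2)"
  have \<delta>0: "0 < \<delta>" unfolding \<delta>_def using s12 g12 by auto
  have Hle: "H \<le> - \<delta>" unfolding H_def \<delta>_def \<psi>int[symmetric]
    by (rule set_integral_mono[OF hgI \<psi>I hg_le])
  have V: "(LINT s:{0<..<1}|lborel. Qf l s * quantile M \<rho> (1 - s)) = B * G + l * H" for l
  proof -
    have "(\<lambda>s. Qf l s * quantile M \<rho> (1 - s)) = (\<lambda>s. B * g s + l * (h s * g s))"
      by (auto simp: fun_eq_iff Qf_def h_def g_def q_def algebra_simps)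
    then show ?thesis unfolding G_def H_def
      using set_integral_add(2)[OF set_integrable_mult_right[OF gint] set_integrable_mult_right[OF hgI]]
      by simp
  qed
  have mem: "Qf l \<in> {Q\<in>QClass. icx_ge Q (quantile M X0)}" if "0 \<le> l" for l
    using QC[OF that] icx[OF that] by blast
  show ?thesis
  proof (rule ccontr)
    assume "\<not> ?thesis"
    then obtain b where b: "b > -\<infinity>"
      "\<And>Q. Q \<in> {Q\<in>QClass. icx_ge Q (quantile M X0)} \<Longrightarrow>
         b \<le> ereal (LINT s:{0<..<1}|lborel. Q s * quantile M \<rho> (1 - s))"
      unfolding INF_eq_minf by blast
    have "b \<le> ereal (B * G + 0 * H)" using b(2)[OF mem[of 0]] V[of 0] by simp
    then have "b \<noteq> \<infinity>" by auto
    then obtain r where r: "b = ereal r" using b(1) by (cases b) auto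
    define l where "l = max 0 ((B * G - r) / \<delta> + 1)"
    have l0: "0 \<le> l" unfolding l_def by simp
    have "r \<le> B * G + l * H" using b(2)[OF mem[OF l0]] V[of l] r by simp
    also have "l * H \<le> l * (- \<delta>)" using Hle l0 by (rule mult_left_mono)
    finally have r1: "r \<le> B * G - l * \<delta>" by simp
    have "((B * G - r) / \<delta> + 1) * \<delta> \<le> l * \<delta>" unfolding l_def
      using \<delta>0 by (intro mult_right_mono) auto
    moreover have "((B * G - r) / \<delta> + 1) * \<delta> = B * G - r + \<delta>"
      using \<delta>0 by (simp add: field_simps)
    ultimately have "B * G - r + \<delta> \<le> l * \<delta>" by simp
    then show False using r1 \<delta>0 by linarith
  qed
qed

end
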